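(* Let $B$ be a unital $C^*$-algebra with a $*$-isomorphism $\psi:B\to M_n\otimes B$ satisfying $\psi(1)=I_n\otimes1$, and suppose that $A$ is a maximal abelian $*$-subalgebra of $B$ with $\sigma_1(A)\subset A$. Then $\psi_m(A)\subset M_n^{\otimes m}\otimes A$ for all $m\ge0$.
   Context: $M_n=M_n(\mathbb{C})$, identity $I_n$. Define $\psi_0=\mathrm{id}_B$, $\psi_{m+1}=(\mathrm{id}^{\otimes m}\otimes\psi)\circ\psi_m:B\to M_n^{\otimes(m+1)}\otimes B$. With $f(b)=I_n\otimes b$, $\sigma_1=\psi^{-1}\circ f:B\to B$. *)

theory Defs
  imports "HOL-Analysis.Analysis"
begin

class cstar_algebra = banach + real_normed_algebra_1 +
  fixes scaleC :: "complex \<Rightarrow> 'a \<Rightarrow> 'a"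
    and cstar :: "'a \<Rightarrow> 'a"
  assumes scaleC_add_right: "scaleC c (x + y) = scaleC c x + scaleC c y"
    and scaleC_add_left: "scaleC (c + d) x = scaleC c x + scaleC d x"
    and scaleC_scaleC: "scaleC c (scaleC d x) = scaleC (c * d) x"
    and scaleC_one: "scaleC 1 x = x"
    and scaleR_scaleC: "scaleR r x = scaleC (complex_of_real r) x"
    and scaleC_mult_left: "scaleC c x * y = scaleC c (x * y)"
    and scaleC_mult_right: "x * scaleC c y = scaleC c (x * y)"
    and norm_scaleC: "norm (scaleC c x) = cmod c * norm x"
    and cstar_cstar: "cstar (cstar x) = x"
    and cstar_add: "cstar (x + y) = cstar x + cstar y"
    and cstar_scaleC: "cstar (scaleC c x) = scaleC (cnj c) (cstar x)"
    and cstar_mult: "cstar (x * y) = cstar y * cstar x"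
    and cstar_identity: "norm (cstar x * x) = (norm x)\<^sup>2"

text \<open>Elements of \<open>M_n \<otimes> B = M_n(B)\<close> are represented as functions
  \<open>nat \<Rightarrow> nat \<Rightarrow> 'b\<close> vanishing outside \<open>{0..<n} \<times> {0..<n}\<close>.\<close>

definition mat_carrier :: "nat \<Rightarrow> (nat \<Rightarrow> nat \<Rightarrow> 'b::zero) set" where
  "mat_carrier n = {X. \<forall>i j. (n \<le> i \<or> n \<le> j) \<longrightarrow> X i j = 0}"

definition mat_mult :: "nat \<Rightarrow> (nat \<Rightarrow> nat \<Rightarrow> 'b::semiring_0) \<Rightarrow> (nat \<Rightarrow> nat \<Rightarrow> 'b) \<Rightarrow> nat \<Rightarrow> nat \<Rightarrow> 'b" where
  "mat_mult n X Y = (\<lambda>i j. if i < n \<and> j < n then (\<Sum>k<n. X i k * Y k j) else 0)"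

definition mat_star :: "nat \<Rightarrow> (nat \<Rightarrow> nat \<Rightarrow> 'b::cstar_algebra) \<Rightarrow> nat \<Rightarrow> nat \<Rightarrow> 'b" where
  "mat_star n X = (\<lambda>i j. if i < n \<and> j < n then cstar (X j i) else 0)"

definition mat_scaleC :: "complex \<Rightarrow> (nat \<Rightarrow> nat \<Rightarrow> 'b::cstar_algebra) \<Rightarrow> nat \<Rightarrow> nat \<Rightarrow> 'b" where
  "mat_scaleC c X = (\<lambda>i j. scaleC c (X i j))"

text \<open>\<open>f(b) = I_n \<otimes> b\<close>; in particular \<open>I_n \<otimes> 1 = diag_mat n 1\<close>.\<close>
definition diag_mat :: "nat \<Rightarrow> 'b::zero \<Rightarrow> nat \<Rightarrow> nat \<Rightarrow> 'b" where
  "diag_mat n b = (\<lambda>i j. if i < n \<and> j < n \<and> i = j then b else 0)"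

definition star_iso_to_mat :: "nat \<Rightarrow> ('b::cstar_algebra \<Rightarrow> nat \<Rightarrow> nat \<Rightarrow> 'b) \<Rightarrow> bool" where
  "star_iso_to_mat n \<psi> \<longleftrightarrow>
     bij_betw \<psi> UNIV (mat_carrier n) \<and>
     (\<forall>x y. \<psi> (x + y) = (\<lambda>i j. \<psi> x i j + \<psi> y i j)) \<and>
     (\<forall>c x. \<psi> (scaleC c x) = mat_scaleC c (\<psi> x)) \<and>
     (\<forall>x y. \<psi> (x * y) = mat_mult n (\<psi> x) (\<psi> y)) \<and>
     (\<forall>x. \<psi> (cstar x) = mat_star n (\<psi> x))"

text \<open>Elements of \<open>M_n^{\<otimes>m} \<otimes> B\<close> are matrices indexed by multi-indices
  (lists of length m with entries < n).  \<open>\<psi>_0 = id\<close>,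
  \<open>\<psi>_{m+1} = (id^{\<otimes>m} \<otimes> \<psi>) \<circ> \<psi>_m\<close>: \<psi> is applied to each entry of \<open>\<psi>_m(b)\<close>
  and the new tensor index is appended as the last one.\<close>
fun psi_iter :: "('b \<Rightarrow> nat \<Rightarrow> nat \<Rightarrow> 'b) \<Rightarrow> nat \<Rightarrow> 'b \<Rightarrow> nat list \<Rightarrow> nat list \<Rightarrow> 'b::zero" where
  "psi_iter \<psi> 0 b = (\<lambda>I J. if I = [] \<and> J = [] then b else 0)"
| "psi_iter \<psi> (Suc m) b = (\<lambda>I J.
     if I \<noteq> [] \<and> J \<noteq> [] then \<psi> (psi_iter \<psi> m b (butlast I) (butlast J)) (last I) (last J)
     else 0)"

definition multi_index :: "nat \<Rightarrow> nat \<Rightarrow> nat list set" where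
  "multi_index n m = {I. length I = m \<and> (\<forall>k\<in>set I. k < n)}"

definition star_subalgebra :: "'b::cstar_algebra set \<Rightarrow> bool" where
  "star_subalgebra A \<longleftrightarrow> 0 \<in> A \<and> (\<forall>x\<in>A. \<forall>y\<in>A. x + y \<in> A \<and> x * y \<in> A) \<and>
     (\<forall>c. \<forall>x\<in>A. scaleC c x \<in> A) \<and> (\<forall>x\<in>A. cstar x \<in> A)"

definition abelian :: "'b::times set \<Rightarrow> bool" where
  "abelian A \<longleftrightarrow> (\<forall>x\<in>A. \<forall>y\<in>A. x * y = y * x)"

definition maximal_abelian_star_subalgebra :: "'b::cstar_algebra set \<Rightarrow> bool" where
  "maximal_abelian_star_subalgebra A \<longleftrightarrow> star_subalgebra A \<and> abelian A \<and>
     (\<forall>C. star_subalgebra C \<and> abelian C \<and> A \<subseteq> C \<longrightarrow> C = A)"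

end

theory Submission
  imports Defs
begin

inductive_set gen :: "'b::cstar_algebra set \<Rightarrow> 'b set" for S where
  base: "x \<in> S \<Longrightarrow> x \<in> gen S"
| zero: "0 \<in> gen S"
| add: "x \<in> gen S \<Longrightarrow> y \<in> gen S \<Longrightarrow> x + y \<in> gen S"
| mul: "x \<in> gen S \<Longrightarrow> y \<in> gen S \<Longrightarrow> x * y \<in> gen S"
| scal: "x \<in> gen S \<Longrightarrow> scaleC c x \<in> gen S"
| star: "x \<in> gen S \<Longrightarrow> cstar x \<in> gen S"

lemma comm_step:
  fixes T :: "'b::cstar_algebra set"
  assumes Tst: "\<forall>s\<in>T. cstar s \<in> T"
    and xg: "x \<in> gen S"
    and base: "\<And>x. x \<in> S \<Longrightarrow> \<forall>s\<in>T. x * s = s * x"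
  shows "\<forall>s\<in>T. x * s = s * x"
  using xg
proof (induction rule: gen.induct)
  case (base x) then show ?case using assms(3) by blast
next
  case zero then show ?case by simp
next
  case (add x y) then show ?case by (simp add: distrib_left distrib_right)
next
  case (mul x y) then show ?case by (metis mult.assoc)
next
  case (scal x c) then show ?case by (simp add: scaleC_mult_left scaleC_mult_right)
next
  case (star x)
  show ?case
  proof
    fix s assume s: "s \<in> T"
    have "cstar x * s = cstar (cstar s * x)" by (simp add: cstar_mult cstar_cstar)
    also have "\<dots> = cstar (x * cstar s)" using star.IH Tst s by metis
    also have "\<dots> = s * cstar x" by (simp add: cstar_mult cstar_cstar)
    finally show "cstar x * s = s * cstar x" .
  qed
qed

lemma gen_sub: "star_subalgebra (gen S)"
  unfolding star_subalgebra_def by (auto intro: gen.intros)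

lemma gen_abelian:
  fixes S :: "'b::cstar_algebra set"
  assumes St: "\<forall>s\<in>S. cstar s \<in> S" and Sc: "\<forall>s\<in>S. \<forall>t\<in>S. s * t = t * s"
  shows "abelian (gen S)"
proof -
  have c1: "\<forall>s\<in>S. x * s = s * x" if "x \<in> gen S" for x
    using comm_step[OF St that] Sc by blast
  have gs: "\<forall>s\<in>gen S. cstar s \<in> gen S" by (auto intro: gen.intros)
  have "\<forall>s\<in>gen S. y * s = s * y" if "y \<in> gen S" for y
    using comm_step[OF gs that] c1 by metis
  then show ?thesis unfolding abelian_def by blast
qed

lemma masa_sa:
  fixes A :: "'b::cstar_algebra set"
  assumes M: "maximal_abelian_star_subalgebra A"
    and hc: "\<forall>a\<in>A. h * a = a * h" and hs: "cstar h = h"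
  shows "h \<in> A"
proof -
  let ?S = "insert h A"
  have SA: "star_subalgebra A" "abelian A" using M unfolding maximal_abelian_star_subalgebra_def by auto
  have St: "\<forall>s\<in>?S. cstar s \<in> ?S" using SA hs unfolding star_subalgebra_def by auto
  have Sc: "\<forall>s\<in>?S. \<forall>t\<in>?S. s * t = t * s" using SA hc unfolding abelian_def by auto
  have "A \<subseteq> gen ?S" by (auto intro: gen.base)
  then have "gen ?S = A" using M gen_sub gen_abelian[OF St Sc]
    unfolding maximal_abelian_star_subalgebra_def by blast
  moreover have "h \<in> gen ?S" by (auto intro: gen.base)
  ultimately show ?thesis by simp
qed

lemma scaleC_minus: "scaleC (-1) (x::'b::cstar_algebra) = - x"
  by (metis scaleR_scaleC scaleR_minus1_left of_real_1 of_real_minus)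

lemma cstar_minus: "cstar (- (x::'b::cstar_algebra)) = - cstar x"
  by (metis scaleC_minus cstar_scaleC complex_cnj_minus complex_cnj_one)

lemma cstar_diff: "cstar ((x::'b::cstar_algebra) - y) = cstar x - cstar y"
  by (metis cstar_add cstar_minus diff_conv_add_uminus)

lemma scaleC_minus_right: "scaleC c (- (x::'b::cstar_algebra)) = - scaleC c x"
  by (metis scaleC_minus scaleC_scaleC mult.commute)

lemma scaleC_diff_right: "scaleC c ((x::'b::cstar_algebra) - y) = scaleC c x - scaleC c y"
  by (metis scaleC_add_right scaleC_minus_right diff_conv_add_uminus)

lemma scaleC_minus_left: "scaleC (- c) (x::'b::cstar_algebra) = - scaleC c x"
  by (metis scaleC_minus scaleC_scaleC mult_minus1)

lemma masa_comm:
  fixes A :: "'b::cstar_algebra set"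
  assumes M: "maximal_abelian_star_subalgebra A"
    and xc: "\<forall>a\<in>A. x * a = a * x"
  shows "x \<in> A"
proof -
  have SA: "star_subalgebra A" using M unfolding maximal_abelian_star_subalgebra_def by auto
  have xsc: "\<forall>a\<in>A. cstar x * a = a * cstar x"
  proof
    fix a assume a: "a \<in> A"
    then have ca: "cstar a \<in> A" using SA unfolding star_subalgebra_def by auto
    have "cstar x * a = cstar (cstar a * x)" by (simp add: cstar_mult cstar_cstar)
    also have "\<dots> = cstar (x * cstar a)" using xc ca by metis
    also have "\<dots> = a * cstar x" by (simp add: cstar_mult cstar_cstar)
    finally show "cstar x * a = a * cstar x" .
  qed
  define h1 where "h1 = x + cstar x"
  define h2 where "h2 = scaleC \<i> (x + scaleC (-1) (cstar x))"
  have "h1 \<in> A"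
    using masa_sa[OF M] xc xsc unfolding h1_def
    by (simp add: distrib_left distrib_right cstar_add cstar_cstar add.commute)
  have "cstar h2 = h2"
    unfolding h2_def by (simp add: cstar_add cstar_scaleC cstar_cstar scaleC_scaleC scaleC_add_right
        scaleC_minus cstar_diff scaleC_diff_right scaleC_minus_left)
  moreover have "\<forall>a\<in>A. h2 * a = a * h2"
    using xc xsc unfolding h2_def
    by (simp add: left_diff_distrib right_diff_distrib scaleC_mult_left scaleC_mult_right scaleC_minus)
  ultimately have "h2 \<in> A" using masa_sa[OF M] by blast
  have "scaleC (1/2) (h1 + scaleC (-1) (scaleC \<i> h2)) = x"
  proof -
    have "scaleC (-1) (scaleC \<i> h2) = x + scaleC (-1) (cstar x)"
      unfolding h2_def by (simp add: scaleC_scaleC scaleC_one)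
    then have "h1 + scaleC (-1) (scaleC \<i> h2) = scaleC 2 x"
      unfolding h1_def by (simp add: scaleC_minus)
        (metis one_add_one scaleC_add_left scaleC_one)
    then show ?thesis by (simp add: scaleC_scaleC scaleC_one)
  qed
  moreover have "scaleC (1/2) (h1 + scaleC (-1) (scaleC \<i> h2)) \<in> A"
    using SA \<open>h1 \<in> A\<close> \<open>h2 \<in> A\<close> unfolding star_subalgebra_def by auto
  ultimately show ?thesis by simp
qed

theorem proposition3p4:
  fixes n :: nat
    and \<psi> :: "'b::cstar_algebra \<Rightarrow> nat \<Rightarrow> nat \<Rightarrow> 'b"
    and A :: "'b set"
  assumes "star_iso_to_mat n \<psi>"
    and "\<psi> 1 = diag_mat n 1"
    and "maximal_abelian_star_subalgebra A"
    and "(inv \<psi> \<circ> diag_mat n) ` A \<subseteq> A"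
  shows "\<forall>m. \<forall>a\<in>A. \<forall>I\<in>multi_index n m. \<forall>J\<in>multi_index n m. psi_iter \<psi> m a I J \<in> A"
proof -
  have iso: "bij_betw \<psi> UNIV (mat_carrier n)"
    and mm: "\<And>x y. \<psi> (x * y) = mat_mult n (\<psi> x) (\<psi> y)"
    using assms(1) unfolding star_iso_to_mat_def by auto
  have SA: "star_subalgebra A" "abelian A" using assms(3) unfolding maximal_abelian_star_subalgebra_def by auto
  have A0: "0 \<in> A" using SA unfolding star_subalgebra_def by auto
  have psiA: "\<psi> a i j \<in> A" if a: "a \<in> A" for a i j
  proof (cases "i < n \<and> j < n")
    case False
    have "\<psi> a \<in> mat_carrier n" using iso by (auto simp: bij_betw_def)
    then have "\<psi> a i j = 0" using False unfolding mat_carrier_def by auto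
    then show ?thesis using A0 by simp
  next
    case True
    show ?thesis
    proof (rule masa_comm[OF assms(3)], intro ballI)
      fix b assume b: "b \<in> A"
      let ?s = "inv \<psi> (diag_mat n b)"
      have sA: "?s \<in> A" using assms(4) b by auto
      have dc: "diag_mat n b \<in> mat_carrier n" unfolding mat_carrier_def diag_mat_def by auto
      have ps: "\<psi> ?s = diag_mat n b"
        using iso dc by (metis bij_betw_imp_surj_on f_inv_into_f)
      have "a * ?s = ?s * a" using SA(2) a sA unfolding abelian_def by auto
      then have eq: "mat_mult n (\<psi> a) (diag_mat n b) = mat_mult n (diag_mat n b) (\<psi> a)"
        using mm ps by metis
      have l: "mat_mult n (\<psi> a) (diag_mat n b) i j = \<psi> a i j * b"
        using True unfolding mat_mult_def diag_mat_def
        by (simp add: if_distrib[of "\<lambda>t. _ * t"] cong: if_cong) 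
      have r: "mat_mult n (diag_mat n b) (\<psi> a) i j = b * \<psi> a i j"
        using True unfolding mat_mult_def diag_mat_def
        by (simp add: if_distrib[of "\<lambda>t. t * _"] cong: if_cong)
      show "\<psi> a i j * b = b * \<psi> a i j" using eq l r by metis
    qed
  qed
  have "psi_iter \<psi> m a I J \<in> A" if "a \<in> A" for m a I J
    using that proof (induction m arbitrary: I J)
    case 0 then show ?case using A0 by simp
  next
    case (Suc m) then show ?case using A0 psiA by simp
  qed
  then show ?thesis by blast
qed

end
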